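(* Let $b_1,b_2,b_3\in\mathbb{R}$ with $b_1b_2b_3\neq 0$, and define $$\bar P^b(x)=\begin{pmatrix}0&\frac{b_1b_2}{b_3}x_3&b_1x_2\\ -\frac{b_1b_2}{b_3}x_3&0&0\\ -b_1x_2&0&0\end{pmatrix},\qquad \bar H^b(x)=-\frac{b_3}{2b_1}x_1^2+x_3,\qquad \bar C^b(x)=\frac{b_1}{2}\Big(x_2^2-\frac{b_2}{b_3}x_3^2\Big).$$ Then: (i) $(\mathbb{R}^3,\bar P^b,\bar H^b)$ is a Hamilton-Poisson realization of the system $$\dot x_1=b_1x_2,\qquad \dot x_2=b_2x_1x_3,\qquad \dot x_3=b_3x_1x_2,$$ that is, $\bar P^b$ defines a Poisson bracket $\{f,g\}_1=(\nabla f)^T\bar P^b\nabla g$ on $\mathbb{R}^3$ and the system reads $\dot x=\bar P^b(x)\nabla\bar H^b(x)$; (ii) $\bar C^b$ is a Casimir of $(\mathbb{R}^3,\{\cdot,\cdot\}_1)$, i.e. $\{\bar C^b,f\}_1=0$ for all $f\in C^\infty(\mathbb{R}^3,\mathbb{R})$. *)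

theory Defs
  imports "HOL-Analysis.Analysis"
begin

definition pd :: "3 \<Rightarrow> (real^3 \<Rightarrow> real) \<Rightarrow> real^3 \<Rightarrow> real" where
  "pd i f x = frechet_derivative f (at x) (axis i 1)"

definition iter_pd :: "3 list \<Rightarrow> (real^3 \<Rightarrow> real) \<Rightarrow> real^3 \<Rightarrow> real" where
  "iter_pd is f = foldr pd is f"

definition smooth3 :: "(real^3 \<Rightarrow> real) \<Rightarrow> bool" where
  "smooth3 f \<longleftrightarrow> (\<forall>is x. iter_pd is f differentiable (at x))"

definition grad3 :: "(real^3 \<Rightarrow> real) \<Rightarrow> real^3 \<Rightarrow> real^3" where
  "grad3 f x = (\<chi> i. pd i f x)"

definition pbracket :: "(real^3 \<Rightarrow> real^3^3) \<Rightarrow> (real^3 \<Rightarrow> real) \<Rightarrow> (real^3 \<Rightarrow> real) \<Rightarrow> real^3 \<Rightarrow> real" where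
  "pbracket P f g x = grad3 f x \<bullet> (P x *v grad3 g x)"

definition poisson_structure :: "(real^3 \<Rightarrow> real^3^3) \<Rightarrow> bool" where
  "poisson_structure P \<longleftrightarrow>
     (\<forall>f g. smooth3 f \<and> smooth3 g \<longrightarrow> smooth3 (pbracket P f g)) \<and>
     (\<forall>f g h a c. smooth3 f \<and> smooth3 g \<and> smooth3 h \<longrightarrow>
        pbracket P (\<lambda>x. a * f x + c * g x) h = (\<lambda>x. a * pbracket P f h x + c * pbracket P g h x)) \<and>
     (\<forall>f g. smooth3 f \<and> smooth3 g \<longrightarrow> pbracket P f g = (\<lambda>x. - pbracket P g f x)) \<and>
     (\<forall>f g h. smooth3 f \<and> smooth3 g \<and> smooth3 h \<longrightarrow>
        (\<forall>x. pbracket P f (pbracket P g h) x + pbracket P g (pbracket P h f) x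
             + pbracket P h (pbracket P f g) x = 0)) \<and>
     (\<forall>f g h. smooth3 f \<and> smooth3 g \<and> smooth3 h \<longrightarrow>
        pbracket P f (\<lambda>x. g x * h x) = (\<lambda>x. pbracket P f g x * h x + g x * pbracket P f h x))"

definition hamilton_poisson_realization ::
  "(real^3 \<Rightarrow> real^3^3) \<Rightarrow> (real^3 \<Rightarrow> real) \<Rightarrow> (real^3 \<Rightarrow> real^3) \<Rightarrow> bool" where
  "hamilton_poisson_realization P H F \<longleftrightarrow>
     poisson_structure P \<and> smooth3 H \<and> (\<forall>x. F x = P x *v grad3 H x)"

definition casimir :: "(real^3 \<Rightarrow> real^3^3) \<Rightarrow> (real^3 \<Rightarrow> real) \<Rightarrow> bool" where
  "casimir P C \<longleftrightarrow> smooth3 C \<and> (\<forall>f. smooth3 f \<longrightarrow> (\<forall>x. pbracket P C f x = 0))"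

definition Pb :: "real \<Rightarrow> real \<Rightarrow> real \<Rightarrow> real^3 \<Rightarrow> real^3^3" where
  "Pb b1 b2 b3 x = vector [
      vector [0, b1 * b2 / b3 * x$3, b1 * x$2],
      vector [- (b1 * b2 / b3 * x$3), 0, 0],
      vector [- (b1 * x$2), 0, 0]]"

definition Hb :: "real \<Rightarrow> real \<Rightarrow> real \<Rightarrow> real^3 \<Rightarrow> real" where
  "Hb b1 b2 b3 x = - (b3 / (2 * b1)) * (x$1)^2 + x$3"

definition Cb :: "real \<Rightarrow> real \<Rightarrow> real \<Rightarrow> real^3 \<Rightarrow> real" where
  "Cb b1 b2 b3 x = b1 / 2 * ((x$2)^2 - b2 / b3 * (x$3)^2)"

definition Fb :: "real \<Rightarrow> real \<Rightarrow> real \<Rightarrow> real^3 \<Rightarrow> real^3" where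
  "Fb b1 b2 b3 x = vector [b1 * x$2, b2 * x$1 * x$3, b3 * x$1 * x$2]"

end

theory Submission imports Defs begin

lemma pd_hasd: "(f has_derivative f') (at x) \<Longrightarrow> pd i f x = f' (axis i 1)"
  unfolding pd_def using frechet_derivative_at by metis

lemma line_deriv:
  fixes f :: "real^3 \<Rightarrow> real"
  assumes "f differentiable at (y + s *\<^sub>R axis i 1)"
  shows "((\<lambda>s. f (y + s *\<^sub>R axis i 1)) has_real_derivative pd i f (y + s *\<^sub>R axis i 1)) (at s)"
proof -
  let ?F = "frechet_derivative f (at (y + s *\<^sub>R axis i 1))"
  have F: "(f has_derivative ?F) (at (y + s *\<^sub>R axis i 1))"
    using assms frechet_derivative_works by blast
  have g: "((\<lambda>s. y + s *\<^sub>R axis i (1::real)) has_derivative (\<lambda>h. h *\<^sub>R axis i 1)) (at s)"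
    by (auto intro!: derivative_eq_intros)
  have c: "((\<lambda>s. f (y + s *\<^sub>R axis i 1)) has_derivative (\<lambda>h. ?F (h *\<^sub>R axis i 1))) (at s)"
    using has_derivative_compose[OF g F] by (simp add: o_def)
  have lin: "linear ?F" using F has_derivative_linear by blast
  have "(\<lambda>h. ?F (h *\<^sub>R axis i 1)) = (\<lambda>h. h * pd i f (y + s *\<^sub>R axis i 1))"
    using linear_scale[OF lin] by (auto simp: pd_def)
  moreover have "(\<lambda>h. h * pd i f (y + s *\<^sub>R axis i 1)) = (*) (pd i f (y + s *\<^sub>R axis i 1))"
    by (auto simp: fun_eq_iff)
  ultimately show ?thesis using c by (simp add: has_field_derivative_def)
qed

lemma smooth_iter: "smooth3 f \<Longrightarrow> smooth3 (iter_pd is f)"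
  unfolding smooth3_def iter_pd_def by (metis foldr_append)

lemma smooth_pd: "smooth3 f \<Longrightarrow> smooth3 (pd i f)"
  using smooth_iter[of f "[i]"] by (simp add: iter_pd_def)

lemma smooth_diff: "smooth3 f \<Longrightarrow> f differentiable at x"
  unfolding smooth3_def iter_pd_def by (metis foldr.simps(1) id_apply)

lemma mvt_box:
  fixes f :: "real^3 \<Rightarrow> real"
  assumes f: "smooth3 f" and t: "t > 0"
  shows "\<exists>\<sigma> \<tau>. 0 < \<sigma> \<and> \<sigma> < t \<and> 0 < \<tau> \<and> \<tau> < t \<and>
     f (x + t *\<^sub>R axis i 1 + t *\<^sub>R axis j 1) - f (x + t *\<^sub>R axis i 1) - f (x + t *\<^sub>R axis j 1) + f x
     = t^2 * pd j (pd i f) (x + \<sigma> *\<^sub>R axis i 1 + \<tau> *\<^sub>R axis j 1)"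
proof -
  have d: "\<And>z. f differentiable at z" using smooth_diff f by blast
  have di: "\<And>z. pd i f differentiable at z" using smooth_diff smooth_pd f by blast
  have "\<exists>\<sigma>>0. \<sigma> < t \<and> (\<lambda>s. f (x + t *\<^sub>R axis j 1 + s *\<^sub>R axis i 1) - f (x + s *\<^sub>R axis i 1)) t
      - (\<lambda>s. f (x + t *\<^sub>R axis j 1 + s *\<^sub>R axis i 1) - f (x + s *\<^sub>R axis i 1)) 0
     = (t - 0) * (pd i f (x + t *\<^sub>R axis j 1 + \<sigma> *\<^sub>R axis i 1) - pd i f (x + \<sigma> *\<^sub>R axis i 1))"
    by (rule MVT2[OF t]) (intro DERIV_diff line_deriv d)
  then obtain \<sigma> where s: "0 < \<sigma>" "\<sigma> < t" and e1:
    "f (x + t *\<^sub>R axis j 1 + t *\<^sub>R axis i 1) - f (x + t *\<^sub>R axis i 1) - (f (x + t *\<^sub>R axis j 1) - f x)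
     = t * (pd i f (x + t *\<^sub>R axis j 1 + \<sigma> *\<^sub>R axis i 1) - pd i f (x + \<sigma> *\<^sub>R axis i 1))"
    by auto
  have "\<exists>\<tau>>0. \<tau> < t \<and> (\<lambda>s. pd i f (x + \<sigma> *\<^sub>R axis i 1 + s *\<^sub>R axis j 1)) t
      - (\<lambda>s. pd i f (x + \<sigma> *\<^sub>R axis i 1 + s *\<^sub>R axis j 1)) 0
     = (t - 0) * pd j (pd i f) (x + \<sigma> *\<^sub>R axis i 1 + \<tau> *\<^sub>R axis j 1)"
    by (rule MVT2[OF t]) (intro line_deriv di)
  then obtain \<tau> where tt: "0 < \<tau>" "\<tau> < t" and e2:
    "pd i f (x + \<sigma> *\<^sub>R axis i 1 + t *\<^sub>R axis j 1) - pd i f (x + \<sigma> *\<^sub>R axis i 1)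
     = t * pd j (pd i f) (x + \<sigma> *\<^sub>R axis i 1 + \<tau> *\<^sub>R axis j 1)"
    by auto
  have "f (x + t *\<^sub>R axis i 1 + t *\<^sub>R axis j 1) - f (x + t *\<^sub>R axis i 1) - f (x + t *\<^sub>R axis j 1) + f x
     = t^2 * pd j (pd i f) (x + \<sigma> *\<^sub>R axis i 1 + \<tau> *\<^sub>R axis j 1)"
    using e1 e2 by (simp add: add_ac power2_eq_square algebra_simps)
  then show ?thesis using s tt by blast
qed

lemma aux_abs: "\<bar>q - a\<bar> * 2 < \<bar>a - b\<bar> \<Longrightarrow> \<bar>q - b\<bar> * 2 < \<bar>a - (b::real)\<bar> \<Longrightarrow> False"
  by (auto simp: abs_real_def split: if_splits)

lemma schwarz:
  fixes f :: "real^3 \<Rightarrow> real"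
  assumes f: "smooth3 f"
  shows "pd j (pd i f) x = pd i (pd j f) x"
proof (rule ccontr)
  assume ne: "pd j (pd i f) x \<noteq> pd i (pd j f) x"
  define d where "d = \<bar>pd j (pd i f) x - pd i (pd j f) x\<bar> / 2"
  have d0: "d > 0" using ne by (simp add: d_def)
  have c1: "continuous (at x) (pd j (pd i f))"
    using smooth_diff smooth_pd f differentiable_imp_continuous_within by blast
  have c2: "continuous (at x) (pd i (pd j f))"
    using smooth_diff smooth_pd f differentiable_imp_continuous_within by blast
  obtain \<delta>1 where \<delta>1: "\<delta>1 > 0" "\<And>y. dist y x < \<delta>1 \<Longrightarrow> dist (pd j (pd i f) y) (pd j (pd i f) x) < d"
    using c1 d0 unfolding continuous_at_eps_delta by blast
  obtain \<delta>2 where \<delta>2: "\<delta>2 > 0" "\<And>y. dist y x < \<delta>2 \<Longrightarrow> dist (pd i (pd j f) y) (pd i (pd j f) x) < d"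
    using c2 d0 unfolding continuous_at_eps_delta by blast
  define t where "t = min \<delta>1 \<delta>2 / 3"
  have t0: "t > 0" using \<delta>1 \<delta>2 by (simp add: t_def)
  obtain \<sigma> \<tau> where st: "0 < \<sigma>" "\<sigma> < t" "0 < \<tau>" "\<tau> < t" and E1:
     "f (x + t *\<^sub>R axis i 1 + t *\<^sub>R axis j 1) - f (x + t *\<^sub>R axis i 1) - f (x + t *\<^sub>R axis j 1) + f x
     = t^2 * pd j (pd i f) (x + \<sigma> *\<^sub>R axis i 1 + \<tau> *\<^sub>R axis j 1)"
    using mvt_box[OF f t0] by blast
  obtain \<sigma>' \<tau>' where st': "0 < \<sigma>'" "\<sigma>' < t" "0 < \<tau>'" "\<tau>' < t" and E2:
     "f (x + t *\<^sub>R axis j 1 + t *\<^sub>R axis i 1) - f (x + t *\<^sub>R axis j 1) - f (x + t *\<^sub>R axis i 1) + f x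
     = t^2 * pd i (pd j f) (x + \<sigma>' *\<^sub>R axis j 1 + \<tau>' *\<^sub>R axis i 1)"
    using mvt_box[OF f t0] by blast
  have "t^2 * pd j (pd i f) (x + \<sigma> *\<^sub>R axis i 1 + \<tau> *\<^sub>R axis j 1)
      = t^2 * pd i (pd j f) (x + \<sigma>' *\<^sub>R axis j 1 + \<tau>' *\<^sub>R axis i 1)"
  proof -
    have L: "f (x + t *\<^sub>R axis i 1 + t *\<^sub>R axis j 1) = f (x + t *\<^sub>R axis j 1 + t *\<^sub>R axis i 1)"
      by (simp add: add_ac)
    show ?thesis using E1 E2 L by linarith
  qed
  then have eq: "pd j (pd i f) (x + \<sigma> *\<^sub>R axis i 1 + \<tau> *\<^sub>R axis j 1)
      = pd i (pd j f) (x + \<sigma>' *\<^sub>R axis j 1 + \<tau>' *\<^sub>R axis i 1)" using t0 by simp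
  have n1: "dist (x + \<sigma> *\<^sub>R axis i 1 + \<tau> *\<^sub>R axis j 1) x < \<delta>1"
  proof -
    have "dist (x + \<sigma> *\<^sub>R axis i 1 + \<tau> *\<^sub>R axis j 1) x = norm (\<sigma> *\<^sub>R axis i (1::real) + \<tau> *\<^sub>R axis j 1)"
      by (simp add: dist_norm)
    also have "\<dots> \<le> \<sigma> + \<tau>"
      using norm_triangle_ineq[of "\<sigma> *\<^sub>R axis i (1::real)" "\<tau> *\<^sub>R axis j 1"] st
      by simp
    finally show ?thesis using st t_def by linarith
  qed
  have n2: "dist (x + \<sigma>' *\<^sub>R axis j 1 + \<tau>' *\<^sub>R axis i 1) x < \<delta>2"
  proof -
    have "dist (x + \<sigma>' *\<^sub>R axis j 1 + \<tau>' *\<^sub>R axis i 1) x = norm (\<sigma>' *\<^sub>R axis j (1::real) + \<tau>' *\<^sub>R axis i 1)"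
      by (simp add: dist_norm)
    also have "\<dots> \<le> \<sigma>' + \<tau>'"
      using norm_triangle_ineq[of "\<sigma>' *\<^sub>R axis j (1::real)" "\<tau>' *\<^sub>R axis i 1"] st'
      by simp
    finally show ?thesis using st' t_def by linarith
  qed
  show False using \<delta>1(2)[OF n1] \<delta>2(2)[OF n2] eq d_def
    by (simp add: dist_real_def) (metis aux_abs)
qed

lemma pd_add[simp]: "f differentiable at x \<Longrightarrow> g differentiable at x \<Longrightarrow>
  pd i (\<lambda>x. f x + g x) x = pd i f x + pd i g x"
  by (drule frechet_derivative_works[THEN iffD1], drule frechet_derivative_works[THEN iffD1])
     (drule (1) has_derivative_add, drule pd_hasd, simp add: pd_def)

lemma pd_sub[simp]: "f differentiable at x \<Longrightarrow> g differentiable at x \<Longrightarrow>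
  pd i (\<lambda>x. f x - g x) x = pd i f x - pd i g x"
  by (drule frechet_derivative_works[THEN iffD1], drule frechet_derivative_works[THEN iffD1])
     (drule (1) has_derivative_diff, drule pd_hasd, simp add: pd_def)

lemma pd_mult[simp]: "f differentiable at x \<Longrightarrow> g differentiable at x \<Longrightarrow>
  pd i (\<lambda>x. f x * g x) x = f x * pd i g x + pd i f x * g x"
  by (drule frechet_derivative_works[THEN iffD1], drule frechet_derivative_works[THEN iffD1])
     (drule (1) has_derivative_mult, drule pd_hasd, simp add: pd_def)

lemma pd_const[simp]: "pd i (\<lambda>x. c) x = 0"
  by (rule pd_hasd) (auto intro!: derivative_eq_intros)

lemma pd_coord[simp]: "pd i (\<lambda>x. x $ k) x = (if k = i then 1 else 0)"
  using pd_hasd[OF bounded_linear_imp_has_derivative[OF bounded_linear_vec_nth[of k]]]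
  by (simp add: axis_def)

lemma diff_coord[simp]: "(\<lambda>x::real^3. x $ k) differentiable at x"
  using bounded_linear_imp_differentiable[OF bounded_linear_vec_nth] by blast

definition sm :: "nat \<Rightarrow> (real^3 \<Rightarrow> real) \<Rightarrow> bool" where
  "sm n f \<longleftrightarrow> (\<forall>is. length is \<le> n \<longrightarrow> (\<forall>x. iter_pd is f differentiable at x))"

lemma sm_0: "sm 0 f \<longleftrightarrow> (\<forall>x. f differentiable at x)"
  by (simp add: sm_def iter_pd_def)

lemma sm_Suc: "sm (Suc n) f \<longleftrightarrow> (\<forall>x. f differentiable at x) \<and> (\<forall>i. sm n (pd i f))"
proof
  assume a: "sm (Suc n) f"
  show "(\<forall>x. f differentiable at x) \<and> (\<forall>i. sm n (pd i f))"
  proof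
    show "\<forall>x. f differentiable at x" using a unfolding sm_def
      by (metis iter_pd_def foldr.simps(1) id_apply list.size(3) zero_le)
    show "\<forall>i. sm n (pd i f)"
    proof (intro allI, unfold sm_def, intro allI impI)
      fix i and "is" :: "3 list" and x assume "length is \<le> n"
      then have "iter_pd (is @ [i]) f differentiable at x" using a unfolding sm_def by simp
      then show "iter_pd is (pd i f) differentiable at x" by (simp add: iter_pd_def)
    qed
  qed
next
  assume a: "(\<forall>x. f differentiable at x) \<and> (\<forall>i. sm n (pd i f))"
  show "sm (Suc n) f" unfolding sm_def
  proof (intro allI impI)
    fix "is" :: "3 list" and x assume l: "length is \<le> Suc n"
    show "iter_pd is f differentiable at x"
    proof (cases "is" rule: rev_cases)
      case Nil then show ?thesis using a by (simp add: iter_pd_def)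
    next
      case (snoc ys i)
      then have "length ys \<le> n" using l by simp
      then have "iter_pd ys (pd i f) differentiable at x" using a unfolding sm_def by blast
      then show ?thesis using snoc by (simp add: iter_pd_def)
    qed
  qed
qed

lemma smooth_sm: "smooth3 f \<longleftrightarrow> (\<forall>n. sm n f)"
  unfolding smooth3_def sm_def by (meson order_refl)

lemma sm_mono: "sm (Suc n) f \<Longrightarrow> sm n f"
  unfolding sm_def by simp

lemma sm_add: "sm n f \<Longrightarrow> sm n g \<Longrightarrow> sm n (\<lambda>x. f x + g x)"
proof (induction n arbitrary: f g)
  case 0 then show ?case by (simp add: sm_0)
next
  case (Suc n)
  have "pd i (\<lambda>x. f x + g x) = (\<lambda>x. pd i f x + pd i g x)" for i
    using Suc.prems by (auto simp: sm_Suc)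
  then show ?case using Suc by (auto simp: sm_Suc)
qed

lemma sm_sub: "sm n f \<Longrightarrow> sm n g \<Longrightarrow> sm n (\<lambda>x. f x - g x)"
proof (induction n arbitrary: f g)
  case 0 then show ?case by (simp add: sm_0)
next
  case (Suc n)
  have "pd i (\<lambda>x. f x - g x) = (\<lambda>x. pd i f x - pd i g x)" for i
    using Suc.prems by (auto simp: sm_Suc)
  then show ?case using Suc by (auto simp: sm_Suc)
qed

lemma sm_mult: "sm n f \<Longrightarrow> sm n g \<Longrightarrow> sm n (\<lambda>x. f x * g x)"
proof (induction n arbitrary: f g)
  case 0 then show ?case by (simp add: sm_0)
next
  case (Suc n)
  have e: "pd i (\<lambda>x. f x * g x) = (\<lambda>x. f x * pd i g x + pd i f x * g x)" for i
    using Suc.prems by (auto simp: sm_Suc)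
  have "sm n (\<lambda>x. f x * pd i g x + pd i f x * g x)" for i
    using Suc.IH Suc.prems sm_mono sm_add by (meson sm_Suc)
  then show ?case using Suc.prems e by (auto simp: sm_Suc)
qed

lemma sm_const: "sm n (\<lambda>x. c)"
proof (induction n arbitrary: c)
  case 0 then show ?case by (simp add: sm_0)
next
  case (Suc n)
  have "pd i (\<lambda>x. c) = (\<lambda>x. 0)" for i by auto
  then show ?case using Suc by (auto simp: sm_Suc)
qed

lemma sm_coord: "sm n (\<lambda>x. x $ k)"
proof (cases n)
  case 0 then show ?thesis by (simp add: sm_0)
next
  case (Suc m)
  have "pd i (\<lambda>x. x $ k) = (\<lambda>x. if k = i then 1 else 0)" for i by auto
  then show ?thesis using Suc sm_const by (auto simp: sm_Suc)
qed

lemma smooth_add[intro]: "smooth3 f \<Longrightarrow> smooth3 g \<Longrightarrow> smooth3 (\<lambda>x. f x + g x)"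
  by (simp add: smooth_sm sm_add)
lemma smooth_sub[intro]: "smooth3 f \<Longrightarrow> smooth3 g \<Longrightarrow> smooth3 (\<lambda>x. f x - g x)"
  by (simp add: smooth_sm sm_sub)
lemma smooth_mult[intro]: "smooth3 f \<Longrightarrow> smooth3 g \<Longrightarrow> smooth3 (\<lambda>x. f x * g x)"
  by (simp add: smooth_sm sm_mult)
lemma smooth_const[intro]: "smooth3 (\<lambda>x. c)"
  by (simp add: smooth_sm sm_const)
lemma smooth_coord[intro]: "smooth3 (\<lambda>x. x $ k)"
  by (simp add: smooth_sm sm_coord)

lemma br_eq: "pbracket (Pb b1 b2 b3) f g = (\<lambda>x. b1 * b2 / b3 * x$3 * (pd 1 f x * pd 2 g x - pd 2 f x * pd 1 g x) + b1 * x$2 * (pd 1 f x * pd 3 g x - pd 3 f x * pd 1 g x))"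
  by (simp add: fun_eq_iff pbracket_def Pb_def grad3_def inner_vec_def matrix_vector_mult_def sum_3 algebra_simps)

lemma br_eqA: "A = b1 * b2 / b3 \<Longrightarrow> pbracket (Pb b1 b2 b3) f g = (\<lambda>x. A * x$3 * (pd 1 f x * pd 2 g x - pd 2 f x * pd 1 g x) + b1 * x$2 * (pd 1 f x * pd 3 g x - pd 3 f x * pd 1 g x))"
  using br_eq by simp

lemma smooth_br: "smooth3 f \<Longrightarrow> smooth3 g \<Longrightarrow> smooth3 (pbracket (Pb b1 b2 b3) f g)"
  unfolding br_eq by (intro smooth_add smooth_sub smooth_mult smooth_const smooth_coord smooth_pd)

lemma diffp[simp]: "smooth3 f \<Longrightarrow> pd i f differentiable at x"
  using smooth_diff smooth_pd by blast

lemma jacobi: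
  assumes f: "smooth3 f" and g: "smooth3 g" and h: "smooth3 h"
  shows "pbracket (Pb b1 b2 b3) f (pbracket (Pb b1 b2 b3) g h) x + pbracket (Pb b1 b2 b3) g (pbracket (Pb b1 b2 b3) h f) x
             + pbracket (Pb b1 b2 b3) h (pbracket (Pb b1 b2 b3) f g) x = 0"
proof -
  define A where "A = b1 * b2 / b3"
  show ?thesis
  using f g h schwarz[OF f, of 2 1] schwarz[OF f, of 3 1] schwarz[OF f, of 3 2]
   schwarz[OF g, of 2 1] schwarz[OF g, of 3 1] schwarz[OF g, of 3 2]
   schwarz[OF h, of 2 1] schwarz[OF h, of 3 1] schwarz[OF h, of 3 2]
  apply (simp add: br_eqA[OF A_def])
  apply (simp add: algebra_simps)
  done
qed

lemma poisson: "poisson_structure (Pb b1 b2 b3)"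
proof -
  define A where "A = b1 * b2 / b3"
  note B = br_eqA[OF A_def]
  have bil: "pbracket (Pb b1 b2 b3) (\<lambda>x. a * f x + c * g x) h = (\<lambda>x. a * pbracket (Pb b1 b2 b3) f h x + c * pbracket (Pb b1 b2 b3) g h x)"
    if "smooth3 f" "smooth3 g" "smooth3 h" for f g h a c
    using that by (simp add: B fun_eq_iff smooth_diff) (simp add: algebra_simps)
  have sk: "pbracket (Pb b1 b2 b3) f g = (\<lambda>x. - pbracket (Pb b1 b2 b3) g f x)" for f g
    by (simp add: B fun_eq_iff algebra_simps)
  have lb: "pbracket (Pb b1 b2 b3) f (\<lambda>x. g x * h x) = (\<lambda>x. pbracket (Pb b1 b2 b3) f g x * h x + g x * pbracket (Pb b1 b2 b3) f h x)"
    if "smooth3 f" "smooth3 g" "smooth3 h" for f g h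
    using that by (simp add: B fun_eq_iff smooth_diff) (simp add: algebra_simps)
  show ?thesis unfolding poisson_structure_def
  proof (intro conjI allI impI)
    fix f g assume "smooth3 f \<and> smooth3 g"
    then show "smooth3 (pbracket (Pb b1 b2 b3) f g)" using smooth_br by blast
  next
    fix f g h a c assume "smooth3 f \<and> smooth3 g \<and> smooth3 h"
    then show "pbracket (Pb b1 b2 b3) (\<lambda>x. a * f x + c * g x) h =
      (\<lambda>x. a * pbracket (Pb b1 b2 b3) f h x + c * pbracket (Pb b1 b2 b3) g h x)"
      using bil by blast
  next
    fix f g show "pbracket (Pb b1 b2 b3) f g = (\<lambda>x. - pbracket (Pb b1 b2 b3) g f x)" by (rule sk)
  next
    fix f g h x assume "smooth3 f \<and> smooth3 g \<and> smooth3 h"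
    then show "pbracket (Pb b1 b2 b3) f (pbracket (Pb b1 b2 b3) g h) x + pbracket (Pb b1 b2 b3) g (pbracket (Pb b1 b2 b3) h f) x
             + pbracket (Pb b1 b2 b3) h (pbracket (Pb b1 b2 b3) f g) x = 0"
      using jacobi by blast
  next
    fix f g h assume "smooth3 f \<and> smooth3 g \<and> smooth3 h"
    then show "pbracket (Pb b1 b2 b3) f (\<lambda>x. g x * h x) =
      (\<lambda>x. pbracket (Pb b1 b2 b3) f g x * h x + g x * pbracket (Pb b1 b2 b3) f h x)"
      using lb by blast
  qed
qed

theorem proposition3p3:
  fixes b1 b2 b3 :: real
  assumes "b1 * b2 * b3 \<noteq> 0"
  shows "hamilton_poisson_realization (Pb b1 b2 b3) (Hb b1 b2 b3) (Fb b1 b2 b3)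
         \<and> casimir (Pb b1 b2 b3) (Cb b1 b2 b3)"
proof -
  have nz: "b1 \<noteq> 0" "b2 \<noteq> 0" "b3 \<noteq> 0" using assms by auto
  define K where "K = - (b3 / (2 * b1))"
  have H: "Hb b1 b2 b3 = (\<lambda>x. K * (x$1 * x$1) + x$3)"
    by (simp add: fun_eq_iff Hb_def K_def power2_eq_square)
  define K1 where "K1 = b1 / 2"
  define K2 where "K2 = b2 / b3"
  have C: "Cb b1 b2 b3 = (\<lambda>x. K1 * (x$2 * x$2 - K2 * (x$3 * x$3)))"
    by (simp add: fun_eq_iff Cb_def K1_def K2_def power2_eq_square)
  have sH: "smooth3 (Hb b1 b2 b3)" unfolding H by (intro smooth_add smooth_sub smooth_mult smooth_const smooth_coord)
  have sC: "smooth3 (Cb b1 b2 b3)" unfolding C by (intro smooth_add smooth_sub smooth_mult smooth_const smooth_coord)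
  have F: "Fb b1 b2 b3 x = Pb b1 b2 b3 x *v grad3 (Hb b1 b2 b3) x" for x
  proof -
    have g: "grad3 (Hb b1 b2 b3) x = vector [2 * K * x$1, 0, 1]"
      unfolding H grad3_def by (simp add: vec_eq_iff forall_3)
    show ?thesis unfolding g
      by (simp add: vec_eq_iff forall_3 matrix_vector_mult_def sum_3 Pb_def Fb_def K_def nz)
  qed
  define A where "A = b1 * b2 / b3"
  have Cas: "pbracket (Pb b1 b2 b3) (Cb b1 b2 b3) f x = 0" if "smooth3 f" for f x
  proof -
    have "pbracket (Pb b1 b2 b3) (Cb b1 b2 b3) f x = A * x$3 * (- (K1 * (2 * x$2)) * pd 1 f x) + b1 * x$2 * (- (K1 * (- (K2 * (2 * x$3)))) * pd 1 f x)"
      unfolding br_eqA[OF A_def] C by simp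
    also have "\<dots> = 0" by (simp add: A_def K1_def K2_def)
    finally show ?thesis .
  qed
  show ?thesis
    unfolding hamilton_poisson_realization_def casimir_def
    using poisson sH sC F Cas by blast
qed

end
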